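(* Let $G$ be a finite non-abelian group. Then the non-centralizer graph $\Upsilon_G$ is regular if and only if $\beta_G(x)=xZ(G)$ for all $x\in G$.
   Context: For a finite group $G$ and $x\in G$, $C_G(x)=\{y\in G\mid xy=yx\}$ and $Z(G)$ is the center of $G$. The non-centralizer graph $\Upsilon_G$ is the simple graph with vertex set $G$ in which two distinct vertices $x,y$ are adjacent if and only if $C_G(x)\neq C_G(y)$. A graph is regular if all its vertices have the same degree. For $x\in G$, $\beta_G(x)=\{y\in G\mid C_G(y)=C_G(x)\}$. *)

theory Defs
  imports "HOL-Algebra.Algebra"
begin

definition centralizer_elt :: "('a, 'b) monoid_scheme \<Rightarrow> 'a \<Rightarrow> 'a set" where
  "centralizer_elt G x = {y \<in> carrier G. x \<otimes>\<^bsub>G\<^esub> y = y \<otimes>\<^bsub>G\<^esub> x}"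

definition group_center :: "('a, 'b) monoid_scheme \<Rightarrow> 'a set" where
  "group_center G = {z \<in> carrier G. \<forall>y \<in> carrier G. z \<otimes>\<^bsub>G\<^esub> y = y \<otimes>\<^bsub>G\<^esub> z}"

definition noncentralizer_adj :: "('a, 'b) monoid_scheme \<Rightarrow> 'a \<Rightarrow> 'a \<Rightarrow> bool" where
  "noncentralizer_adj G x y \<longleftrightarrow> x \<in> carrier G \<and> y \<in> carrier G \<and> x \<noteq> y
     \<and> centralizer_elt G x \<noteq> centralizer_elt G y"

definition noncentralizer_degree :: "('a, 'b) monoid_scheme \<Rightarrow> 'a \<Rightarrow> nat" where
  "noncentralizer_degree G x = card {y \<in> carrier G. noncentralizer_adj G x y}"

definition noncentralizer_regular :: "('a, 'b) monoid_scheme \<Rightarrow> bool" where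
  "noncentralizer_regular G \<longleftrightarrow>
     (\<forall>x \<in> carrier G. \<forall>y \<in> carrier G. noncentralizer_degree G x = noncentralizer_degree G y)"

definition beta_set :: "('a, 'b) monoid_scheme \<Rightarrow> 'a \<Rightarrow> 'a set" where
  "beta_set G x = {y \<in> carrier G. centralizer_elt G y = centralizer_elt G x}"

end

theory Submission
  imports Defs
begin

context group
begin

lemma ce_mult_center:
  assumes x: "x \<in> carrier G" and z: "z \<in> group_center G"
  shows "centralizer_elt G (x \<otimes> z) = centralizer_elt G x"
proof -
  have zc: "z \<in> carrier G" and zy: "\<And>y. y \<in> carrier G \<Longrightarrow> z \<otimes> y = y \<otimes> z"
    using z by (auto simp: group_center_def)
  have "x \<otimes> z \<otimes> y = y \<otimes> (x \<otimes> z) \<longleftrightarrow> x \<otimes> y = y \<otimes> x" if y: "y \<in> carrier G" for y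
  proof -
    have "x \<otimes> z \<otimes> y = x \<otimes> (z \<otimes> y)" using x y zc by (simp add: m_assoc)
    also have "\<dots> = x \<otimes> (y \<otimes> z)" using zy[OF y] by simp
    also have "\<dots> = (x \<otimes> y) \<otimes> z" using x y zc by (simp add: m_assoc)
    finally have e1: "x \<otimes> z \<otimes> y = (x \<otimes> y) \<otimes> z" .
    have e2: "y \<otimes> (x \<otimes> z) = (y \<otimes> x) \<otimes> z" using y x zc by (simp add: m_assoc)
    have "((x \<otimes> y) \<otimes> z = (y \<otimes> x) \<otimes> z) = (x \<otimes> y = y \<otimes> x)"
      using right_cancel[of z "x \<otimes> y" "y \<otimes> x"] x y zc by blast
    then show ?thesis unfolding e1 e2 .
  qed
  note key = this
  show ?thesis unfolding centralizer_elt_def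
  proof (rule Collect_cong)
    fix y
    show "(y \<in> carrier G \<and> x \<otimes> z \<otimes> y = y \<otimes> (x \<otimes> z)) = (y \<in> carrier G \<and> x \<otimes> y = y \<otimes> x)"
      using key[of y] by blast
  qed
qed

lemma coset_sub_beta:
  assumes x: "x \<in> carrier G"
  shows "x <# group_center G \<subseteq> beta_set G x"
proof
  fix w assume "w \<in> x <# group_center G"
  then obtain z where z: "z \<in> group_center G" and w: "w = x \<otimes> z"
    unfolding l_coset_def by auto
  have "z \<in> carrier G" using z by (simp add: group_center_def)
  then show "w \<in> beta_set G x" using ce_mult_center[OF x z] w x
    by (simp add: beta_set_def)
qed

lemma card_coset_center:
  assumes x: "x \<in> carrier G"
  shows "card (x <# group_center G) = card (group_center G)"
proof -
  have "inj_on (\<lambda>h. x \<otimes> h) (group_center G)"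
    using x by (auto simp: inj_on_def group_center_def)
  moreover have "x <# group_center G = (\<lambda>h. x \<otimes> h) ` group_center G"
    unfolding l_coset_def by auto
  ultimately show ?thesis by (simp add: card_image)
qed

lemma beta_one: "beta_set G \<one> = group_center G"
proof -
  have c1: "centralizer_elt G \<one> = carrier G" by (auto simp: centralizer_elt_def)
  show ?thesis
  proof
    show "beta_set G \<one> \<subseteq> group_center G"
    proof
      fix y assume "y \<in> beta_set G \<one>"
      hence y: "y \<in> carrier G" and cy: "centralizer_elt G y = carrier G"
        unfolding beta_set_def c1 by auto
      have "\<forall>g \<in> carrier G. y \<otimes> g = g \<otimes> y"
      proof
        fix g assume "g \<in> carrier G"
        hence "g \<in> centralizer_elt G y" using cy by simp
        thus "y \<otimes> g = g \<otimes> y" unfolding centralizer_elt_def by simp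
      qed
      thus "y \<in> group_center G" using y unfolding group_center_def by simp
    qed
    show "group_center G \<subseteq> beta_set G \<one>"
    proof
      fix y assume yz: "y \<in> group_center G"
      hence y: "y \<in> carrier G" unfolding group_center_def by simp
      have "centralizer_elt G y = carrier G"
        using yz unfolding centralizer_elt_def group_center_def by auto
      thus "y \<in> beta_set G \<one>" using y unfolding beta_set_def c1 by simp
    qed
  qed
qed

lemma degree_eq:
  assumes x: "x \<in> carrier G" and fin: "finite (carrier G)"
  shows "noncentralizer_degree G x = card (carrier G) - card (beta_set G x)"
proof -
  have "{y \<in> carrier G. noncentralizer_adj G x y} = carrier G - beta_set G x"
    using x by (auto simp: noncentralizer_adj_def beta_set_def)
  moreover have "beta_set G x \<subseteq> carrier G" by (auto simp: beta_set_def)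
  ultimately show ?thesis unfolding noncentralizer_degree_def
    using fin by (simp add: card_Diff_subset finite_subset)
qed

end

theorem proposition2p4:
  fixes G :: "('a, 'b) monoid_scheme"
  assumes "group G" and "finite (carrier G)" and "\<not> comm_group G"
  shows "noncentralizer_regular G \<longleftrightarrow>
           (\<forall>x \<in> carrier G. beta_set G x = x <#\<^bsub>G\<^esub> group_center G)"
proof -
  interpret group G by fact
  have fin: "finite (carrier G)" by fact
  have bsub: "\<And>x. beta_set G x \<subseteq> carrier G" by (auto simp: beta_set_def)
  have finb: "\<And>x. finite (beta_set G x)" using fin bsub finite_subset by blast
  show ?thesis
  proof
    assume reg: "noncentralizer_regular G"
    show "\<forall>x \<in> carrier G. beta_set G x = x <#\<^bsub>G\<^esub> group_center G"
    proof
      fix x assume x: "x \<in> carrier G"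
      have "noncentralizer_degree G x = noncentralizer_degree G \<one>\<^bsub>G\<^esub>"
        using reg x one_closed unfolding noncentralizer_regular_def by blast
      hence "card (carrier G) - card (beta_set G x) = card (carrier G) - card (group_center G)"
        using degree_eq[OF x fin] degree_eq[OF one_closed fin] beta_one by simp
      moreover have "card (beta_set G x) \<le> card (carrier G)"
        using bsub fin card_mono by blast
      moreover have "card (group_center G) \<le> card (carrier G)"
        using card_mono[OF fin bsub[of "\<one>\<^bsub>G\<^esub>"]] unfolding beta_one .
      ultimately have "card (beta_set G x) = card (x <#\<^bsub>G\<^esub> group_center G)"
        using card_coset_center[OF x] by linarith
      then show "beta_set G x = x <#\<^bsub>G\<^esub> group_center G"
        using card_subset_eq[OF finb coset_sub_beta[OF x]] by metis
    qed
  next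
    assume h: "\<forall>x \<in> carrier G. beta_set G x = x <#\<^bsub>G\<^esub> group_center G"
    show "noncentralizer_regular G"
      unfolding noncentralizer_regular_def
    proof (intro ballI)
      fix x y assume x: "x \<in> carrier G" and y: "y \<in> carrier G"
      have "noncentralizer_degree G x = card (carrier G) - card (group_center G)"
        using h x degree_eq[OF x fin] card_coset_center[OF x] by metis
      moreover have "noncentralizer_degree G y = card (carrier G) - card (group_center G)"
        using h y degree_eq[OF y fin] card_coset_center[OF y] by metis
      ultimately show "noncentralizer_degree G x = noncentralizer_degree G y" by simp
    qed
  qed
qed

end
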